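(* Let $J$ be a real unital Jordan algebra of dimension $n\ge2$ with unit $e$, $\gamma$ a non-degenerate trace form on $J$ with $\gamma(e,e)=-1$, $\mathcal Y$ the connected component of $e$ in the set of invertible elements, and $\zeta$ the 1-form on $\mathcal Y$ given at $x$ by $\zeta(u)=-\gamma(u,x^{-1})$. Let $\Gamma=\{u\in J:\gamma(u,e)=0\}$ and let $\Pi\subset GL(J)$ be the group generated by the operators $P_u$, $u$ in a small neighbourhood of $e$. Then: $\zeta$ evaluates to $1$ on the position vector field $x$; $\zeta$ is closed and invariant under $\Pi$; its kernel $\Delta$ is an involutive $(n-1)$-dimensional distribution on $\mathcal Y$; $D\zeta$ is non-degenerate; $\zeta$ annihilates the vector field $X_w(x)=x\bullet w$ for every $w\in\Gamma$; and both $\Delta$ and $D\zeta$ are invariant under the map $x\mapsto x^{-1}$ on $\mathcal Y$. All these assertions except $\zeta(x)\equiv1$ remain valid without the condition $\gamma(e,e)=-1$.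
   Context: Real Jordan algebra: real vector space with commutative bilinear product $\bullet$ satisfying $x\bullet(x^2\bullet y)=x^2\bullet(x\bullet y)$; $L_xy=x\bullet y$; $P_x=2L_x^2-L_{x^2}$; $x$ is invertible iff $\det P_x\ne0$, with $x^{-1}=P_x^{-1}x$. Trace form: symmetric bilinear $\gamma$ with $\gamma(u\bullet v,w)=\gamma(u,v\bullet w)$. $D$ denotes the flat derivative on $J$. *)

theory Defs
  imports "HOL-Analysis.Analysis"
begin

definition Pop :: "(real^'n \<Rightarrow> real^'n \<Rightarrow> real^'n) \<Rightarrow> real^'n \<Rightarrow> real^'n \<Rightarrow> real^'n" where
  "Pop jm x = (\<lambda>y. 2 *\<^sub>R jm x (jm x y) - jm (jm x x) y)"

definition jinvertible :: "(real^'n \<Rightarrow> real^'n \<Rightarrow> real^'n) \<Rightarrow> real^'n \<Rightarrow> bool" where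
  "jinvertible jm x \<longleftrightarrow> det (matrix (Pop jm x)) \<noteq> 0"

definition jinverse :: "(real^'n \<Rightarrow> real^'n \<Rightarrow> real^'n) \<Rightarrow> real^'n \<Rightarrow> real^'n" where
  "jinverse jm x = inv (Pop jm x) x"

definition is_jordan_algebra :: "(real^'n \<Rightarrow> real^'n \<Rightarrow> real^'n) \<Rightarrow> bool" where
  "is_jordan_algebra jm \<longleftrightarrow> bilinear jm \<and> (\<forall>x y. jm x y = jm y x)
     \<and> (\<forall>x y. jm x (jm (jm x x) y) = jm (jm x x) (jm x y))"

definition is_trace_form :: "(real^'n \<Rightarrow> real^'n \<Rightarrow> real^'n) \<Rightarrow> (real^'n \<Rightarrow> real^'n \<Rightarrow> real) \<Rightarrow> bool" where
  "is_trace_form jm \<gamma> \<longleftrightarrow> bilinear \<gamma> \<and> (\<forall>u v. \<gamma> u v = \<gamma> v u)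
     \<and> (\<forall>u v w. \<gamma> (jm u v) w = \<gamma> u (jm v w))"

definition nondegenerate_form :: "('a::real_vector \<Rightarrow> 'a \<Rightarrow> real) \<Rightarrow> bool" where
  "nondegenerate_form B \<longleftrightarrow> (\<forall>u. (\<forall>v. B u v = 0) \<longrightarrow> u = 0)"

definition zeta :: "(real^'n \<Rightarrow> real^'n \<Rightarrow> real^'n) \<Rightarrow> (real^'n \<Rightarrow> real^'n \<Rightarrow> real) \<Rightarrow> real^'n \<Rightarrow> real^'n \<Rightarrow> real" where
  "zeta jm \<gamma> x u = - \<gamma> u (jinverse jm x)"

definition flatD :: "('a::real_normed_vector \<Rightarrow> 'a \<Rightarrow> real) \<Rightarrow> 'a \<Rightarrow> 'a \<Rightarrow> 'a \<Rightarrow> real" where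
  "flatD \<omega> x u v = frechet_derivative (\<lambda>y. \<omega> y v) (at x) u"

inductive_set gen_group :: "('a \<Rightarrow> 'a) set \<Rightarrow> ('a \<Rightarrow> 'a) set" for S where
  gen_id: "id \<in> gen_group S"
| gen_mult: "g \<in> gen_group S \<Longrightarrow> s \<in> S \<Longrightarrow> s \<circ> g \<in> gen_group S"
| gen_inv: "g \<in> gen_group S \<Longrightarrow> s \<in> S \<Longrightarrow> inv s \<circ> g \<in> gen_group S"

end

theory Submission
  imports Defs
begin


typedef (overloaded) ('n::finite) jop = "UNIV :: ((real^'n) \<Rightarrow>\<^sub>L (real^'n)) set" morphisms jrep jabs by simp
setup_lifting type_definition_jop

instantiation jop :: (finite) real_normed_vector
begin
lift_definition norm_jop :: "'a jop \<Rightarrow> real" is norm .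
lift_definition minus_jop :: "'a jop \<Rightarrow> 'a jop \<Rightarrow> 'a jop" is "(-)" .
lift_definition plus_jop :: "'a jop \<Rightarrow> 'a jop \<Rightarrow> 'a jop" is "(+)" .
lift_definition uminus_jop :: "'a jop \<Rightarrow> 'a jop" is "uminus" .
lift_definition zero_jop :: "'a jop" is "0" .
lift_definition scaleR_jop :: "real \<Rightarrow> 'a jop \<Rightarrow> 'a jop" is "scaleR" .
definition dist_jop :: "'a jop \<Rightarrow> 'a jop \<Rightarrow> real" where "dist_jop a b = norm (a - b)"
definition uniformity_jop :: "('a jop \<times> 'a jop) filter" where
  "uniformity_jop = (INF e\<in>{0 <..}. principal {(x, y). dist x y < e})"
definition open_jop :: "'a jop set \<Rightarrow> bool"
  where "open_jop S = (\<forall>x\<in>S. \<forall>\<^sub>F (x', y) in uniformity. x' = x \<longrightarrow> y \<in> S)"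
definition sgn_jop :: "'a jop \<Rightarrow> 'a jop" where "sgn_jop x = scaleR (inverse (norm x)) x"
instance
  apply standard
  unfolding dist_jop_def open_jop_def sgn_jop_def uniformity_jop_def
  apply (rule refl | (transfer, force simp: norm_triangle_ineq algebra_simps))+
  done
end

instantiation jop :: (finite) real_normed_algebra_1
begin
lift_definition times_jop :: "'a jop \<Rightarrow> 'a jop \<Rightarrow> 'a jop" is "blinfun_compose" .
lift_definition one_jop :: "'a jop" is "id_blinfun" .
instance
  apply standard
  apply (transfer, rule blinfun_eqI, simp add: blinfun.bilinear_simps)
  apply (transfer, rule blinfun_eqI, simp add: blinfun.bilinear_simps)
  apply (transfer, rule blinfun_eqI, simp add: blinfun.bilinear_simps)
  apply (transfer, rule blinfun_eqI, simp add: blinfun.bilinear_simps)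
  apply (transfer, rule blinfun_eqI, simp add: blinfun.bilinear_simps)
  apply (transfer, rule blinfun_eqI, simp add: blinfun.bilinear_simps)
  apply (transfer, rule blinfun_eqI, simp add: blinfun.bilinear_simps)
  apply (transfer, metis blinfun_apply_id_blinfun blinfun.zero_left zero_neq_one axis_nth axis_eq_0_iff)
  apply (transfer, rule norm_blinfun_compose)
  apply (transfer, simp)
  done
end

lemma jop_apply_times: "jrep (A * B) x = jrep A (jrep B x)"
  by transfer simp
lemma jop_apply_one[simp]: "jrep 1 x = x"
  by transfer simp

instance jop :: (finite) banach
proof
  fix X :: "nat \<Rightarrow> 'a jop"
  assume "Cauchy X"
  then have "Cauchy (\<lambda>n. jrep (X n))"
    unfolding Cauchy_def dist_norm by (simp add: minus_jop.rep_eq norm_jop.rep_eq)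
  then obtain L where "(\<lambda>n. jrep (X n)) \<longlonglongrightarrow> L"
    using convergent_eq_Cauchy by blast
  then have "X \<longlonglongrightarrow> jabs L"
    unfolding tendsto_iff dist_norm
    by (simp add: minus_jop.rep_eq norm_jop.rep_eq jabs_inverse)
  then show "convergent X" by (auto simp: convergent_def)
qed

lemma jop_plus: "jrep (A + B) x = jrep A x + jrep B x" by transfer (simp add: blinfun.bilinear_simps)
lemma jop_scaleR: "jrep (r *\<^sub>R A) x = r *\<^sub>R jrep A x" by transfer (simp add: blinfun.bilinear_simps)
lemma jop_uminus: "jrep (- A) x = - jrep A x" by transfer (simp add: blinfun.bilinear_simps)
lemma jop_norm: "norm (jrep A x) \<le> norm A * norm x" by transfer (rule norm_blinfun)
lemma jop_bl: "bounded_bilinear (\<lambda>(A::'n::finite jop) x. jrep A x)"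
proof
  fix a a' :: "'n jop" and b b' :: "real^'n" and r :: real
  show "jrep (a + a') b = jrep a b + jrep a' b" by (rule jop_plus)
  show "jrep a (b + b') = jrep a b + jrep a b'" by transfer (simp add: blinfun.bilinear_simps)
  show "jrep (r *\<^sub>R a) b = r *\<^sub>R jrep a b" by (rule jop_scaleR)
  show "jrep a (r *\<^sub>R b) = r *\<^sub>R jrep a b" by transfer (simp add: blinfun.bilinear_simps)
  show "\<exists>K. \<forall>a b. norm (jrep a b) \<le> norm a * norm b * K"
    by (rule exI[of _ 1]) (simp add: jop_norm)
qed
lemma jop_linear: "linear (blinfun_apply (jrep A))" by transfer (simp add: blinfun.bounded_linear_right bounded_linear.linear)
lemma jop_Lop: "bounded_linear f \<Longrightarrow> blinfun_apply (jrep (jabs (Blinfun f))) = f"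
  by (simp add: jabs_inverse bounded_linear_Blinfun_apply)




locale jcore =
  fixes jm :: "'a::real_vector \<Rightarrow> 'a \<Rightarrow> 'a"
  assumes add_left: "jm (x + y) z = jm x z + jm y z"
    and scaleR_left: "jm (r *\<^sub>R x) z = r *\<^sub>R jm x z"
    and comm: "jm x y = jm y x"
    and jid: "jm x (jm (jm x x) y) = jm (jm x x) (jm x y)"
begin
lemma add_right: "jm z (x + y) = jm z x + jm z y" using add_left comm by metis
lemma scaleR_right: "jm z (r *\<^sub>R x) = r *\<^sub>R jm z x" using scaleR_left comm by metis
lemma minus_left: "jm (- x) z = - jm x z" using scaleR_left[of "-1" x z] by simp
lemma minus_right: "jm z (- x) = - jm z x" using scaleR_right[of z "-1" x] by simp
lemma diff_left: "jm (x - y) z = jm x z - jm y z" using add_left[of x "-y"] minus_left by simp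
lemma diff_right: "jm z (x - y) = jm z x - jm z y" using add_right[of z x "-y"] minus_right by simp
lemma zero_left: "jm 0 z = 0" using scaleR_left[of 0 x z] by simp
lemma zero_right: "jm z 0 = 0" using scaleR_right[of z 0 x] by simp

lemmas JS = add_left add_right diff_left diff_right minus_left minus_right scaleR_left scaleR_right zero_left zero_right

definition T where "T x c = jm x (jm (jm x x) c) - jm (jm x x) (jm x c)"
lemma T0: "T x c = 0" unfolding T_def using jid by simp

definition C1 where "C1 y a c = jm a (jm (jm y y) c) + jm y (jm (jm a y) c) + jm y (jm (jm a y) c)
   - jm (jm y y) (jm a c) - jm (jm a y) (jm y c) - jm (jm a y) (jm y c)"

lemma polar1: "T (y+a) c - T (y-a) c = C1 y a c + C1 y a c + T a c + T a c"
  unfolding T_def C1_def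
  by (simp add: JS comm[of y a])

lemma vs1: "(x::'a) + (x + y) = 2 *\<^sub>R x + y" "(x::'a) + x = 2 *\<^sub>R x"
  "a *\<^sub>R (x::'a) + (b *\<^sub>R x + y) = (a+b) *\<^sub>R x + y" "a *\<^sub>R (x::'a) + b *\<^sub>R x = (a+b) *\<^sub>R x"
  "(x::'a) + (b *\<^sub>R x + y) = (1+b) *\<^sub>R x + y" "(x::'a) + b *\<^sub>R x = (1+b) *\<^sub>R x"
  "a *\<^sub>R (x::'a) + (x + y) = (a+1) *\<^sub>R x + y" "a *\<^sub>R (x::'a) + x = (a+1) *\<^sub>R x"
  by (simp_all add: scaleR_2 algebra_simps)

lemma scaleR_4: "(4::real) *\<^sub>R (x::'a) = x + x + x + x"
  by (metis (no_types, lifting) add.assoc numeral_Bit0 scaleR_2 scaleR_left_distrib)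
lemmas lin = algebra_simps scaleR_2 scaleR_4

lemma dbl0: "(x::'a) + x = 0 \<Longrightarrow> x = 0"
  by (metis add.right_neutral add_diff_cancel_left' diff_add_cancel scaleR_2 scaleR_zero_right
      scaleR_right_diff_distrib zero_neq_numeral scaleR_cancel_left)

lemma C10: "C1 y a c = 0"
  using polar1[of y a c] T0 by (auto intro: dbl0)

definition M where "M a b w c =
   jm w (jm (jm a b) c) - jm (jm a b) (jm w c)
 + jm a (jm (jm b w) c) - jm (jm b w) (jm a c)
 + jm b (jm (jm a w) c) - jm (jm a w) (jm b c)"

lemma polar2: "C1 (y+w) a c - C1 y a c - C1 w a c = M a y w c + M a y w c"
  unfolding C1_def M_def
  by (simp add: JS comm[of y a] comm[of w a] comm[of w y] algebra_simps)

lemma M0: "M a b w c = 0"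
  using polar2[of b w a c] C10 by (auto intro: dbl0)

lemma J1: "jm a (jm (jm y y) w) + 2 *\<^sub>R jm y (jm (jm a y) w) = jm (jm y y) (jm a w) + 2 *\<^sub>R jm (jm a y) (jm y w)"
  using C10[of y a w] unfolding C1_def by (simp add: scaleR_2 algebra_simps)

lemma J2: "jm (jm (jm a b) c) w = jm (jm a b) (jm c w) + jm (jm c a) (jm b w) + jm (jm c b) (jm a w)
   - jm a (jm c (jm b w)) - jm b (jm c (jm a w))"
proof -
  have "M a b w c = 0" by (rule M0)
  moreover have "jm w (jm (jm a b) c) = jm (jm (jm a b) c) w" "jm (jm a b) (jm w c) = jm (jm a b) (jm c w)"
    "jm a (jm (jm b w) c) = jm a (jm c (jm b w))" "jm (jm b w) (jm a c) = jm (jm c a) (jm b w)"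
    "jm b (jm (jm a w) c) = jm b (jm c (jm a w))" "jm (jm a w) (jm b c) = jm (jm c b) (jm a w)"
    by (metis comm)+
  ultimately show ?thesis unfolding M_def by (simp add: algebra_simps)
qed

lemma N: "2 *\<^sub>R jm (jm a y) (jm y v) + 2 *\<^sub>R jm y (jm (jm a y) v) - 2 *\<^sub>R jm y (jm y (jm a v))
  - 2 *\<^sub>R jm (jm y (jm a y)) v + jm (jm y y) (jm a v) - 2 *\<^sub>R jm a (jm y (jm y v)) + jm a (jm (jm y y) v) = 0"
proof -
  have "jm (jm y (jm a y)) v = jm (jm (jm a y) y) v" by (metis comm)
  also have "\<dots> = jm (jm a y) (jm y v) + jm (jm y a) (jm y v) + jm (jm y y) (jm a v)
     - jm a (jm y (jm y v)) - jm y (jm y (jm a v))" by (rule J2)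
  finally have h: "jm (jm y (jm a y)) v = 2 *\<^sub>R jm (jm a y) (jm y v) + jm (jm y y) (jm a v)
     - jm a (jm y (jm y v)) - jm y (jm y (jm a v))" by (simp add: comm[of y a] scaleR_2)
  have j1: "jm a (jm (jm y y) v) = jm (jm y y) (jm a v) + 2 *\<^sub>R jm (jm a y) (jm y v) - 2 *\<^sub>R jm y (jm (jm a y) v)"
    using J1[of a y v] by (simp add: algebra_simps)
  show ?thesis unfolding h j1 by (simp add: algebra_simps vs1)
qed

definition P where "P x y = 2 *\<^sub>R jm x (jm x y) - jm (jm x x) y"

lemma P_add: "P x (u + v) = P x u + P x v" and P_diff: "P x (u - v) = P x u - P x v"
  and P_scale: "P x (r *\<^sub>R u) = r *\<^sub>R P x u" and P_zero: "P x 0 = 0"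
  unfolding P_def by (simp_all add: JS algebra_simps)

lemma s1: "P x (jm x w) = jm x (P x w)"
  unfolding P_def by (simp add: JS jid)

lemma s3: "P x (jm (jm x x) w) = jm (jm x x) (P x w)"
  unfolding P_def by (simp add: JS jid)

lemma Pe_gen: "P x y = 2 *\<^sub>R jm x (jm x y) - jm (jm x x) y" by (simp add: P_def)

end

locale junit = jcore +
  fixes e assumes unit: "jm e x = x"
begin

lemma unit2: "jm x e = x" using unit comm by metis
lemma P_e: "P e y = y" unfolding P_def by (simp add: unit scaleR_2)
lemma P_x_e: "P x e = jm x x" unfolding P_def by (simp add: unit2 scaleR_2)

lemma inv_facts:
  assumes inj: "\<And>u v. P x u = P x v \<Longrightarrow> u = v" and z: "P x z = x"
  shows "jm x z = e" "\<And>w. jm x (jm z w) = jm z (jm x w)" "\<And>w. P z (P x w) = w"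
    "\<And>w. P x (jm z w) = jm x w" "jm (jm x x) z = x" "\<And>w. P z (jm x w) = jm z w"
proof -
  have inj0: "\<And>u. P x u = 0 \<Longrightarrow> u = 0" using inj P_zero by metis
  have s2: "jm x z = e"
    by (rule inj) (simp add: s1 z P_x_e)
  have s4: "jm (jm x x) z = x"
    by (rule inj) (simp add: s3 z, simp add: P_def comm[of x "jm x x"] scaleR_2)
  have s5: "\<And>w. jm z (jm (jm x x) w) = jm (jm x x) (jm z w)"
    using J1[of z x] by (simp add: comm[of z x] s2 unit)
  have Eq1: "\<And>w. jm x (jm x (jm z w)) + jm z (jm x (jm x w)) - jm (jm x x) (jm z w) = jm x w"
  proof -
    fix w
    have "jm (jm (jm x z) x) w = jm (jm x z) (jm x w) + jm (jm x x) (jm z w) + jm (jm x z) (jm x w)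
      - jm x (jm x (jm z w)) - jm z (jm x (jm x w))" by (rule J2)
    then show "?thesis w" by (simp add: s2 unit lin)
  qed
  have Eq2: "\<And>w. 2 *\<^sub>R jm x (jm z (jm x w)) = jm (jm x x) (jm z w) + jm x w"
  proof -
    fix w
    have "jm (jm (jm x x) z) w = jm (jm x x) (jm z w) + jm (jm z x) (jm x w) + jm (jm z x) (jm x w)
      - jm x (jm z (jm x w)) - jm x (jm z (jm x w))" by (rule J2)
    then show "?thesis w" by (simp add: s2 s4 comm[of z x] unit lin)
  qed
  define C where "C w = jm x (jm z w) - jm z (jm x w)" for w
  have Clin: "C (u - v) = C u - C v" "C (2 *\<^sub>R u) = 2 *\<^sub>R C u" for u v
    unfolding C_def by (simp_all add: JS algebra_simps)
  have s6: "\<And>w. jm x (C w) = C (jm x w)"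
  proof -
    fix w show "?thesis w" using Eq1[of w] Eq2[of w] unfolding C_def by (simp add: JS lin)
  qed
  have s7: "\<And>w. jm (jm x x) (C w) = C (jm (jm x x) w)"
    unfolding C_def by (simp add: JS s5 jid)
  have Eq1': "\<And>w. P x (jm z w) + jm z (P x w) = 2 *\<^sub>R jm x w"
  proof -
    fix w show "?thesis w" using Eq1[of w] s5[of w] unfolding P_def by (simp add: JS lin)
  qed
  have s8: "\<And>w. P x (C w) + C (P x w) = 0"
  proof -
    fix w
    have a: "jm x (P x (jm z w) + jm z (P x w)) = jm x (2 *\<^sub>R jm x w)" by (simp add: Eq1')
    have b: "P x (jm z (jm x w)) + jm z (P x (jm x w)) = 2 *\<^sub>R jm x (jm x w)" by (rule Eq1')
    from a b show "?thesis w" unfolding C_def by (simp add: JS P_diff s1[symmetric] algebra_simps)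
  qed
  have s9: "\<And>w. C (P x w) = P x (C w)"
    unfolding P_def by (simp add: Clin s6 s7)
  have s10: "\<And>w. jm x (jm z w) = jm z (jm x w)"
  proof -
    fix w
    have "P x (C w) + P x (C w) = 0" using s8[of w] s9[of w] by simp
    then have "P x (C w) = 0" by (rule dbl0)
    then have "C w = 0" by (rule inj0)
    then show "?thesis w" unfolding C_def by simp
  qed
  have s11: "\<And>w. P x (jm z w) = jm x w"
    using Eq2 s10 unfolding P_def by (simp add: algebra_simps)
  have s12: "\<And>w. jm x (jm (jm z z) w) = jm (jm z z) (jm x w)"
    using J1[of x z] by (simp add: s2 unit)
  have s13: "\<And>w. jm (jm z z) (jm x w) = 2 *\<^sub>R jm z (jm z (jm x w)) - jm z w"
  proof -
    fix w
    have "jm (jm (jm z x) z) w = jm (jm z x) (jm z w) + jm (jm z z) (jm x w) + jm (jm z x) (jm z w)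
      - jm z (jm z (jm x w)) - jm x (jm z (jm z w))" by (rule J2)
    then show "?thesis w" by (simp add: s2 comm[of z x] unit s10 lin)
  qed
  have s14: "\<And>w. P z (jm x w) = jm z w"
    unfolding P_def by (simp add: s13 lin)
  have s15: "jm (jm z z) (jm x x) = e"
    using s13[of x] by (simp add: comm[of z "jm x x"] s4 comm[of z x] s2 scaleR_2)
  have s16: "\<And>w. w = jm (jm z z) (jm (jm x x) w) + 2 *\<^sub>R jm x (jm z w) - 2 *\<^sub>R jm z (jm z (jm (jm x x) w))"
  proof -
    fix w
    have "jm (jm (jm z z) (jm x x)) w = jm (jm z z) (jm (jm x x) w) + jm (jm (jm x x) z) (jm z w) + jm (jm (jm x x) z) (jm z w)
      - jm z (jm (jm x x) (jm z w)) - jm z (jm (jm x x) (jm z w))" by (rule J2)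
    then show "?thesis w" by (simp add: s15 s4 unit s5[symmetric] lin)
  qed
  have s17: "\<And>w. P z (P x w) = w"
  proof -
    fix w
    have "P z (P x w) = 2 *\<^sub>R jm z (jm z (P x w)) - jm (jm z z) (P x w)" by (simp add: P_def)
    also have "\<dots> = 4 *\<^sub>R jm z (jm z (jm x (jm x w))) - 2 *\<^sub>R jm z (jm z (jm (jm x x) w))
       - 2 *\<^sub>R jm (jm z z) (jm x (jm x w)) + jm (jm z z) (jm (jm x x) w)"
      by (simp add: P_def JS lin)
    also have "\<dots> = - 2 *\<^sub>R jm z (jm z (jm (jm x x) w)) + 2 *\<^sub>R jm z (jm x w) + jm (jm z z) (jm (jm x x) w)"
      by (simp add: s13 lin)
    also have "\<dots> = w" using s16[of w] by (simp add: s10 lin)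
    finally show "?thesis w" .
  qed
  show "jm x z = e" "\<And>w. jm x (jm z w) = jm z (jm x w)" "\<And>w. P z (P x w) = w"
    "\<And>w. P x (jm z w) = jm x w" "jm (jm x x) z = x" "\<And>w. P z (jm x w) = jm z w"
    using s2 s10 s17 s11 s4 s14 by auto
qed

end



locale jv =
  fixes jm :: "real^'n \<Rightarrow> real^'n \<Rightarrow> real^'n" and e :: "real^'n" and \<gamma> :: "real^'n \<Rightarrow> real^'n \<Rightarrow> real"
  assumes bil: "bilinear jm" and jcomm: "\<And>x y. jm x y = jm y x"
    and jjid: "\<And>x y. jm x (jm (jm x x) y) = jm (jm x x) (jm x y)"
    and junit: "\<And>x. jm e x = x"
    and trf: "is_trace_form jm \<gamma>" and nd: "nondegenerate_form \<gamma>"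
begin

lemma bb: "bounded_bilinear jm" using bil bilinear_conv_bounded_bilinear by blast

sublocale junit jm e
proof
  show "jm (x + y) z = jm x z + jm y z" for x y z using bil by (simp add: bilinear_ladd)
  show "jm (r *\<^sub>R x) z = r *\<^sub>R jm x z" for r x z using bil by (simp add: bilinear_lmul)
qed (rule jcomm jjid junit)+

sublocale J: bounded_bilinear jm by (rule bb)

lemma gbil: "bilinear \<gamma>" and gsym: "\<gamma> u v = \<gamma> v u" and gtr: "\<gamma> (jm u v) w = \<gamma> u (jm v w)"
  using trf unfolding is_trace_form_def by auto
lemma gbb: "bounded_bilinear \<gamma>" using gbil bilinear_conv_bounded_bilinear by blast
sublocale G: bounded_bilinear \<gamma> by (rule gbb)

lemma Pop_eq: "Pop jm x = P x" by (simp add: Pop_def P_def fun_eq_iff)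

lemma P_linear: "linear (P x)"
  by (rule linearI) (simp_all add: P_add P_scale)
lemma P_bl: "bounded_linear (P x)"
  using P_linear linear_conv_bounded_linear by blast

lemma jinv_iff: "jinvertible jm x \<longleftrightarrow> inj (P x)"
  unfolding jinvertible_def Pop_eq using det_nz_iff_inj[OF P_linear] .

lemma inj_bij: "inj (P x) \<Longrightarrow> bij (P x)"
  unfolding bij_def using linear_inj_imp_surj[OF P_linear] by blast

lemma Lsa: "\<gamma> (jm a u) v = \<gamma> u (jm a v)"
proof -
  have "jm a u = jm u a" by (rule jcomm)
  then show ?thesis using gtr[of u a v] by simp
qed

lemma P_selfadj: "\<gamma> (P x u) v = \<gamma> u (P x v)"
  unfolding P_def by (simp only: G.diff_left G.diff_right G.scaleR_left G.scaleR_right Lsa)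

context
  fixes x assumes xi: "jinvertible jm x"
begin

lemma xinj: "inj (P x)" using xi jinv_iff by blast
lemma xbij: "bij (P x)" using xinj inj_bij by blast

lemma P_jinv: "P x (jinverse jm x) = x"
  unfolding jinverse_def Pop_eq using xbij by (simp add: bij_is_surj surj_f_inv_f)

lemmas IF = inv_facts[OF injD[OF xinj] P_jinv]

lemma jinv_mul: "jm x (jinverse jm x) = e" using IF(1) .
lemma jinv_comm: "jm x (jm (jinverse jm x) w) = jm (jinverse jm x) (jm x w)" using IF(2) .

lemma P_inv_eq: "P (jinverse jm x) = inv (P x)"
proof
  fix w
  have "w = P x (inv (P x) w)" using xbij by (simp add: bij_is_surj surj_f_inv_f)
  then show "P (jinverse jm x) w = inv (P x) w" using IF(3) by metis
qed

lemma P_inv_left: "P (jinverse jm x) (P x w) = w" using IF(3) .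
lemma P_inv_right: "P x (P (jinverse jm x) w) = w"
  using xbij unfolding P_inv_eq by (simp add: bij_is_surj surj_f_inv_f)

lemma jinv_invertible: "jinvertible jm (jinverse jm x)"
  unfolding jinv_iff by (metis P_inv_right injI)

lemma P_inv_x: "P (jinverse jm x) x = jinverse jm x" using P_inv_left[of "jinverse jm x"] P_jinv by simp

end

lemma jinv_unique: "jinvertible jm x \<Longrightarrow> P x w = x \<Longrightarrow> jinverse jm x = w"
  using P_jinv jinv_iff injD by metis

lemma jinv_jinv: "jinvertible jm x \<Longrightarrow> jinverse jm (jinverse jm x) = x"
  using jinv_unique[OF jinv_invertible P_inv_x] .

lemma e_inv: "jinvertible jm e" "jinverse jm e = e"
proof -
  show i: "jinvertible jm e" unfolding jinv_iff by (simp add: P_e inj_on_def)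
  show "jinverse jm e = e" by (rule jinv_unique[OF i]) (simp add: P_e)
qed

lemma numv: "(numeral k :: real^'n) * x = (numeral k :: real) *\<^sub>R x"
  by (metis of_real_numeral scaleR_conv_of_real)
lemma jmnum[simp]: "jm (numeral k * x) y = numeral k * jm x y" "jm y (numeral k * x) = numeral k * jm y x"
  by (simp_all add: numv J.scaleR_left J.scaleR_right)

definition T3 where "T3 a b v = jm a (jm b v) + jm b (jm a v) - jm (jm a b) v"

lemma P_T3: "P a v = T3 a a v" unfolding P_def T3_def by (simp add: scaleR_2)

lemma T3_sym: "T3 a b v = T3 b a v" unfolding T3_def by (simp add: jcomm[of a b])

lemma P_add_arg: "P (x + h) v = P x v + 2 *\<^sub>R T3 x h v + P h v"
  unfolding P_T3 T3_def by (simp add: JS jcomm[of h x] scaleR_2 algebra_simps)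

lemma Kpos: "\<exists>K>0. \<forall>a b. norm (jm a b) \<le> K * norm a * norm b"
proof -
  obtain K where K: "K > 0" "\<And>a b. norm (jm a b) \<le> norm a * norm b * K" using J.pos_bounded by blast
  show ?thesis by (rule exI[of _ K]) (use K in \<open>simp add: ac_simps\<close>)
qed

lemma jm_bound2:
  assumes K: "K > 0" and Kb: "\<And>a b. norm (jm a b) \<le> K * norm a * norm b"
  shows "norm (jm a (jm b v)) \<le> K*K*norm a*norm b*norm v" "norm (jm (jm a b) v) \<le> K*K*norm a*norm b*norm v"
proof -
  have "norm (jm a (jm b v)) \<le> K * norm a * norm (jm b v)" by (rule Kb)
  also have "\<dots> \<le> K * norm a * (K * norm b * norm v)" by (rule mult_left_mono[OF Kb]) (simp add: K less_imp_le)
  finally show "norm (jm a (jm b v)) \<le> K*K*norm a*norm b*norm v" by (simp add: ac_simps)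
  have "norm (jm (jm a b) v) \<le> K * norm (jm a b) * norm v" by (rule Kb)
  also have "\<dots> \<le> K * (K * norm a * norm b) * norm v"
    by (intro mult_right_mono mult_left_mono Kb) (simp_all add: K less_imp_le)
  finally show "norm (jm (jm a b) v) \<le> K*K*norm a*norm b*norm v" by (simp add: ac_simps)
qed

lemma T3_bound:
  assumes K: "K > 0" and Kb: "\<And>a b. norm (jm a b) \<le> K * norm a * norm b"
  shows "norm (T3 a b v) \<le> 3*K*K*norm a*norm b*norm v"
proof -
  note B = jm_bound2[OF K Kb]
  have "norm (T3 a b v) \<le> norm (jm a (jm b v)) + norm (jm b (jm a v)) + norm (jm (jm a b) v)"
    unfolding T3_def using norm_triangle_ineq4[of "jm a (jm b v) + jm b (jm a v)" "jm (jm a b) v"]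
      norm_triangle_ineq[of "jm a (jm b v)" "jm b (jm a v)"] by linarith
  also have "\<dots> \<le> K*K*norm a*norm b*norm v + K*K*norm b*norm a*norm v + K*K*norm a*norm b*norm v"
    by (intro add_mono B)
  finally show ?thesis by (simp add: algebra_simps)
qed

lemma P_bound:
  assumes K: "K > 0" and Kb: "\<And>a b. norm (jm a b) \<le> K * norm a * norm b"
  shows "norm (P a v) \<le> 3*K*K*norm a*norm a*norm v"
  using T3_bound[OF K Kb, of a a v] by (simp add: P_T3)

lemma Pdiff_bound:
  assumes K: "K > 0" and Kb: "\<And>a b. norm (jm a b) \<le> K * norm a * norm b" and h: "norm (y - x) \<le> 1"
  shows "norm (P y v - P x v) \<le> (6*K*K*norm x + 3*K*K) * norm (y - x) * norm v"
proof -
  define h where "h = y - x"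
  have y: "y = x + h" by (simp add: h_def)
  have "norm (P y v - P x v) = norm (2 *\<^sub>R T3 x h v + P h v)" unfolding y P_add_arg by simp
  also have "\<dots> \<le> 2 * norm (T3 x h v) + norm (P h v)"
    using norm_triangle_ineq[of "2 *\<^sub>R T3 x h v" "P h v"] by simp
  also have "\<dots> \<le> 2 * (3*K*K*norm x*norm h*norm v) + 3*K*K*norm h*norm h*norm v"
    by (intro add_mono mult_left_mono T3_bound[OF K Kb] P_bound[OF K Kb]) auto
  also have "\<dots> \<le> 2 * (3*K*K*norm x*norm h*norm v) + 3*K*K*norm h*1*norm v"
    using h K unfolding h_def by (intro add_mono mult_left_mono mult_right_mono) auto
  finally show ?thesis unfolding h_def by (simp add: algebra_simps)
qed

lemma lowerb:
  assumes xi: "jinvertible jm x"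
  obtains B d where "B > 0" "d > 0" "\<And>y v. norm (y - x) < d \<Longrightarrow> B * norm v \<le> norm (P y v)"
proof -
  obtain B0 where B0: "B0 > 0" "\<And>v. B0 * norm v \<le> norm (P x v)"
    using linear_inj_bounded_below_pos[OF P_linear xinj[OF xi]] by blast
  obtain K where K: "K > 0" "\<And>a b. norm (jm a b) \<le> K * norm a * norm b" using Kpos by auto
  define c where "c = 6*K*K*norm x + 3*K*K"
  have c: "c > 0" unfolding c_def using K by (simp add: add_nonneg_pos)
  define d where "d = min 1 (B0 / (2*c))"
  have d: "d > 0" unfolding d_def using c B0 by simp
  show ?thesis
  proof (rule that[of "B0/2" d])
    show "B0/2 > 0" "d > 0" using B0 d by auto
    fix y v assume yd: "norm (y - x) < d"
    then have y1: "norm (y - x) \<le> 1" unfolding d_def by simp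
    have "norm (P y v - P x v) \<le> c * norm (y - x) * norm v"
      using Pdiff_bound[OF K y1] unfolding c_def .
    also have "\<dots> \<le> c * (B0 / (2*c)) * norm v"
      using yd c unfolding d_def by (intro mult_right_mono mult_left_mono) auto
    also have "\<dots> = B0/2 * norm v" using c by simp
    finally have "norm (P y v - P x v) \<le> B0/2 * norm v" .
    moreover have "norm (P x v) \<le> norm (P y v) + norm (P y v - P x v)"
    proof -
      have "norm (P x v) = norm (P y v - (P y v - P x v))" by simp
      also have "\<dots> \<le> norm (P y v) + norm (P y v - P x v)" by (rule norm_triangle_ineq4)
      finally show ?thesis .
    qed
    ultimately show "B0/2 * norm v \<le> norm (P y v)" using B0(2)[of v] by simp
  qed
qed

lemma inj_from_lb: "B > 0 \<Longrightarrow> (\<And>v. B * norm v \<le> norm (P y v)) \<Longrightarrow> jinvertible jm y"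
  unfolding jinv_iff
proof (rule injI)
  fix u w assume B: "B > 0" "\<And>v. B * norm v \<le> norm (P y v)" and "P y u = P y w"
  then have "P y (u - w) = 0" by (simp add: P_diff)
  then have "B * norm (u - w) \<le> 0" using B(2)[of "u-w"] by simp
  then show "u = w" using B(1) by (simp add: mult_le_0_iff)
qed

lemma open_inv: "open {x. jinvertible jm x}"
  unfolding open_dist
proof safe
  fix x assume xi: "jinvertible jm x"
  obtain B d where Bd: "B > 0" "d > 0" "\<And>y v. norm (y - x) < d \<Longrightarrow> B * norm v \<le> norm (P y v)"
    using lowerb[OF xi] by blast
  show "\<exists>e>0. \<forall>y. dist y x < e \<longrightarrow> y \<in> {x. jinvertible jm x}"
  proof (intro exI[of _ d] conjI allI impI)
    fix y assume "dist y x < d"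
    then have "norm (y - x) < d" by (simp add: dist_norm)
    then show "y \<in> {x. jinvertible jm x}" using inj_from_lb[OF Bd(1)] Bd(3) by blast
  qed (rule Bd(2))
qed

lemma T3_xz: "jinvertible jm x \<Longrightarrow> T3 x h (jinverse jm x) = h"
proof -
  assume xi: "jinvertible jm x"
  have "jm x (jm h (jinverse jm x)) = jm (jm x h) (jinverse jm x)"
    using jinv_comm[OF xi, of h] by (simp add: jcomm)
  then show ?thesis unfolding T3_def using jinv_mul[OF xi] by (simp add: jcomm[of h] unit2)
qed

lemma key_identity:
  assumes xi: "jinvertible jm x" and yi: "jinvertible jm y"
  shows "P y (jinverse jm y - jinverse jm x + P (jinverse jm x) (y - x))
     = - P (y - x) (jinverse jm x) + 2 *\<^sub>R T3 x (y - x) (P (jinverse jm x) (y - x)) + P (y - x) (P (jinverse jm x) (y - x))"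
proof -
  define h where "h = y - x"
  define z where "z = jinverse jm x"
  have y: "y = x + h" by (simp add: h_def)
  have a: "P y (jinverse jm y) = y" by (rule P_jinv[OF yi])
  have b: "P y z = x + 2 *\<^sub>R h + P h z"
    unfolding y P_add_arg z_def using P_jinv[OF xi] T3_xz[OF xi] by (simp add: numv)
  have c: "P y (P z h) = h + 2 *\<^sub>R T3 x h (P z h) + P h (P z h)"
    unfolding y P_add_arg z_def using P_inv_right[OF xi] by simp
  have "P y (jinverse jm y - z + P z h) = P y (jinverse jm y) - P y z + P y (P z h)"
    by (simp add: P_add P_diff)
  also have "\<dots> = - P h z + 2 *\<^sub>R T3 x h (P z h) + P h (P z h)"
    unfolding a b c by (simp add: y numv)
  finally show ?thesis unfolding h_def z_def .
qed

lemma jinv_deriv: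
  assumes xi: "jinvertible jm x"
  shows "(jinverse jm has_derivative (\<lambda>h. - P (jinverse jm x) h)) (at x)"
proof -
  define z where "z = jinverse jm x"
  obtain B d where Bd: "B > 0" "d > 0" "\<And>y v. norm (y - x) < d \<Longrightarrow> B * norm v \<le> norm (P y v)"
    using lowerb[OF xi] by blast
  obtain K where K: "K > 0" "\<And>a b. norm (jm a b) \<le> K * norm a * norm b" using Kpos by auto
  obtain Mz where Mz: "Mz > 0" "\<And>h. norm (P z h) \<le> norm h * Mz"
    using bounded_linear.pos_bounded[OF P_bl[of z]] by blast
  define C where "C = 3*K*K*norm z + 6*K*K*norm x*Mz + 3*K*K*Mz + 1"
  have C: "C > 0" unfolding C_def using K Mz by (simp add: add_nonneg_pos)
  have est: "norm (jinverse jm y - z + P z (y - x)) \<le> C / B * (norm (y - x) * norm (y - x))"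
    if yd: "norm (y - x) < min d 1" for y
  proof -
    define h where "h = y - x"
    have h1: "norm h \<le> 1" using yd unfolding h_def by simp
    have hd: "norm h < d" using yd unfolding h_def by simp
    have yi: "jinvertible jm y" using inj_from_lb[OF Bd(1)] Bd(3) hd unfolding h_def by blast
    define r where "r = jinverse jm y - z + P z h"
    have Pr: "P y r = - P h z + 2 *\<^sub>R T3 x h (P z h) + P h (P z h)"
      unfolding r_def h_def z_def by (rule key_identity[OF xi yi])
    have n1: "norm (P h z) \<le> 3*K*K*norm z * (norm h * norm h)"
      using P_bound[OF K, of h z] by (simp add: ac_simps)
    have n2: "norm (T3 x h (P z h)) \<le> 3*K*K*norm x*Mz * (norm h * norm h)"
    proof -
      have "norm (T3 x h (P z h)) \<le> 3*K*K*norm x*norm h*norm (P z h)" by (rule T3_bound[OF K])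
      also have "\<dots> \<le> 3*K*K*norm x*norm h*(norm h * Mz)"
        using K by (intro mult_left_mono Mz(2)) auto
      finally show ?thesis by (simp add: ac_simps)
    qed
    have n3: "norm (P h (P z h)) \<le> 3*K*K*Mz * (norm h * norm h)"
    proof -
      have "norm (P h (P z h)) \<le> 3*K*K*norm h*norm h*norm (P z h)" by (rule P_bound[OF K])
      also have "\<dots> \<le> 3*K*K*norm h*norm h*(norm h * Mz)"
        using K by (intro mult_left_mono Mz(2)) auto
      also have "\<dots> \<le> 3*K*K*norm h*norm h*(1 * Mz)"
        using K Mz h1 by (intro mult_left_mono mult_right_mono) auto
      finally show ?thesis by (simp add: ac_simps)
    qed
    have "norm (P y r) \<le> norm (P h z) + 2 * norm (T3 x h (P z h)) + norm (P h (P z h))"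
      unfolding Pr using norm_triangle_ineq[of "- P h z + 2 *\<^sub>R T3 x h (P z h)" "P h (P z h)"]
        norm_triangle_ineq[of "- P h z" "2 *\<^sub>R T3 x h (P z h)"] by simp
    also have "\<dots> \<le> C * (norm h * norm h)"
    proof -
      define hh where "hh = norm h * norm h"
      have hh: "hh \<ge> 0" unfolding hh_def by simp
      have "C * hh = 3*K*K*norm z * hh + 2 * (3*K*K*norm x*Mz * hh) + 3*K*K*Mz * hh + hh"
        unfolding C_def by (simp add: algebra_simps)
      then show ?thesis using n1 n2 n3 hh unfolding hh_def[symmetric] by linarith
    qed
    finally have "B * norm r \<le> C * (norm h * norm h)" using Bd(3)[OF hd[unfolded h_def], of r] unfolding h_def by simp
    then have "norm r \<le> C * (norm h * norm h) / B" using Bd(1) by (simp add: field_simps)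
    then show ?thesis unfolding r_def h_def by simp
  qed
  show ?thesis
    unfolding has_derivative_at_alt
  proof (intro conjI allI impI)
    show "bounded_linear (\<lambda>h. - P (jinverse jm x) h)"
      using P_bl bounded_linear_minus by blast
    fix \<epsilon> :: real assume ep: "\<epsilon> > 0"
    define d' where "d' = min (min d 1) (\<epsilon> * B / C)"
    have d': "d' > 0" unfolding d'_def using Bd C ep by simp
    show "\<exists>d>0. \<forall>y. norm (y - x) < d \<longrightarrow>
        norm (jinverse jm y - jinverse jm x - - P (jinverse jm x) (y - x)) \<le> \<epsilon> * norm (y - x)"
    proof (intro exI[of _ d'] conjI allI impI)
      show "d' > 0" by (rule d')
      fix y assume yd: "norm (y - x) < d'"
      then have "norm (y - x) < min d 1" unfolding d'_def by simp
      note E = est[OF this]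
      have "C / B * (norm (y - x) * norm (y - x)) \<le> C / B * ((\<epsilon> * B / C) * norm (y - x))"
        using yd C Bd(1) unfolding d'_def by (intro mult_left_mono mult_right_mono) auto
      also have "\<dots> = \<epsilon> * norm (y - x)" using C Bd(1) by simp
      finally show "norm (jinverse jm y - jinverse jm x - - P (jinverse jm x) (y - x)) \<le> \<epsilon> * norm (y - x)"
        using E unfolding z_def by simp
    qed
  qed
qed

end



lemma exp_rem_bound:
  fixes X :: "'a::{real_normed_algebra_1,banach}"
  shows "norm (exp X - 1 - X) \<le> norm X * norm X * exp (norm X)"
proof -
  define f where "f n = inverse (fact (n + 2)) *\<^sub>R (X ^ (n + 2))" for n
  define g where "g n = norm X * norm X * (norm X ^ n / fact n)" for n
  have e: "exp X - 1 - X = suminf f" unfolding f_def using exp_first_two_terms[of X] by simp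
  have fg: "norm (f n) \<le> g n" for n
  proof -
    have "norm (f n) = norm (X ^ (n+2)) / fact (n+2)" unfolding f_def by (simp add: divide_inverse mult.commute)
    also have "\<dots> \<le> norm X ^ (n+2) / fact (n+2)"
      by (intro divide_right_mono norm_power_ineq) simp
    also have "\<dots> \<le> norm X ^ (n+2) / fact n"
      by (intro divide_left_mono fact_mono) auto
    finally show ?thesis unfolding g_def by (simp add: power_add power2_eq_square field_simps)
  qed
  have "(\<lambda>n. norm X ^ n / fact n) sums exp (norm X)"
    using exp_converges[of "norm X"] by (simp add: divide_inverse mult.commute)
  then have gs: "g sums (norm X * norm X * exp (norm X))"
    unfolding g_def by (rule sums_mult)
  have ns: "summable (\<lambda>n. norm (f n))"
    by (rule summable_comparison_test[of _ g]) (use fg gs in \<open>auto simp: sums_summable\<close>)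
  have "norm (suminf f) \<le> (\<Sum>n. norm (f n))" by (rule summable_norm[OF ns])
  also have "\<dots> \<le> suminf g" by (rule suminf_le[OF fg ns sums_summable[OF gs]])
  also have "\<dots> = norm X * norm X * exp (norm X)" using gs sums_unique by metis
  finally show ?thesis unfolding e .
qed

lemma exp_deriv0:
  "(exp has_derivative (\<lambda>X. X)) (at (0::'a::{real_normed_algebra_1,banach}))"
  unfolding has_derivative_at_alt
proof (intro conjI allI impI)
  show "bounded_linear (\<lambda>X::'a. X)" by (rule bounded_linear_ident)
  fix \<epsilon> :: real assume ep: "\<epsilon> > 0"
  define d where "d = min 1 (\<epsilon> / 3)"
  show "\<exists>d>0. \<forall>y. norm (y - 0) < d \<longrightarrow> norm (exp y - exp (0::'a) - (y - 0)) \<le> \<epsilon> * norm (y - 0)"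
  proof (intro exI[of _ d] conjI allI impI)
    show "d > 0" unfolding d_def using ep by simp
    fix y :: 'a assume "norm (y - 0) < d"
    then have y1: "norm y \<le> 1" and y2: "norm y \<le> \<epsilon> / 3" unfolding d_def by auto
    have "exp (norm y) \<le> exp 1" using y1 by simp
    also have "exp (1::real) \<le> 3" using exp_le by simp
    finally have e3: "exp (norm y) \<le> 3" .
    have "norm (exp y - 1 - y) \<le> norm y * norm y * exp (norm y)" by (rule exp_rem_bound)
    also have "\<dots> \<le> norm y * (\<epsilon> / 3) * 3"
      using y2 e3 ep by (intro mult_mono mult_left_mono) auto
    finally show "norm (exp y - exp (0::'a) - (y - 0)) \<le> \<epsilon> * norm (y - 0)" by (simp add: mult.commute)
  qed
qed

lemma norm_pow_diff:
  fixes X H :: "'a::real_normed_algebra_1"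
  shows "norm ((X + H)^n - X^n) \<le> (norm X + norm H)^n - norm X ^ n"
proof (induction n)
  case 0 then show ?case by simp
next
  case (Suc n)
  have eq: "(X + H)^(Suc n) - X^(Suc n) = (X + H) * ((X + H)^n - X^n) + H * X^n"
    by (simp add: algebra_simps)
  have "norm ((X + H)^(Suc n) - X^(Suc n)) \<le> norm ((X + H) * ((X + H)^n - X^n)) + norm (H * X^n)"
    unfolding eq by (rule norm_triangle_ineq)
  also have "\<dots> \<le> norm (X + H) * norm ((X + H)^n - X^n) + norm H * norm (X^n)"
    by (intro add_mono norm_mult_ineq)
  also have "\<dots> \<le> (norm X + norm H) * ((norm X + norm H)^n - norm X ^ n) + norm H * norm X ^ n"
    by (intro add_mono mult_mono Suc.IH norm_triangle_ineq mult_left_mono norm_power_ineq) auto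
  also have "\<dots> = (norm X + norm H)^(Suc n) - norm X ^ (Suc n)"
    by (simp add: algebra_simps)
  finally show ?case .
qed

lemma exp_diff_bound:
  fixes X H :: "'a::{real_normed_algebra_1,banach}"
  shows "norm (exp (X + H) - exp X) \<le> exp (norm X + norm H) - exp (norm X)"
proof -
  define f where "f n = ((X + H)^n - X^n) /\<^sub>R fact n" for n
  define g where "g n = ((norm X + norm H)^n - norm X ^ n) / fact n" for n
  have fs: "f sums (exp (X + H) - exp X)"
    unfolding f_def scaleR_diff_right using sums_diff[OF exp_converges exp_converges] .
  have geq: "g = (\<lambda>n. (norm X + norm H)^n /\<^sub>R fact n - norm X ^ n /\<^sub>R fact n)"
    by (rule ext) (simp add: g_def divide_inverse right_diff_distrib mult.commute)
  have gs: "g sums (exp (norm X + norm H) - exp (norm X))"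
    unfolding geq by (rule sums_diff[OF exp_converges exp_converges])
  have fg: "norm (f n) \<le> g n" for n
  proof -
    have "norm (f n) = norm ((X + H)^n - X^n) / fact n" unfolding f_def by (simp add: divide_inverse mult.commute)
    also have "\<dots> \<le> ((norm X + norm H)^n - norm X ^ n) / fact n"
      by (rule divide_right_mono[OF norm_pow_diff]) simp
    finally show ?thesis unfolding g_def .
  qed
  have ns: "summable (\<lambda>n. norm (f n))"
    by (rule summable_comparison_test[of _ g]) (use fg gs in \<open>auto simp: sums_summable\<close>)
  have "norm (exp (X + H) - exp X) = norm (suminf f)" using fs sums_unique by metis
  also have "\<dots> \<le> (\<Sum>n. norm (f n))" by (rule summable_norm[OF ns])
  also have "\<dots> \<le> suminf g" by (rule suminf_le[OF fg ns sums_summable[OF gs]])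
  also have "\<dots> = exp (norm X + norm H) - exp (norm X)" using gs sums_unique by metis
  finally show ?thesis .
qed

lemma isCont_exp_gen: "isCont exp (X::'a::{real_normed_algebra_1,banach})"
  unfolding isCont_def LIM_eq
proof (intro allI impI)
  fix r :: real assume r: "r > 0"
  have "isCont exp (norm X)" by (rule isCont_exp)
  then obtain d where d: "d > 0" "\<And>y. y \<noteq> norm X \<and> norm (y - norm X) < d \<Longrightarrow> norm (exp y - exp (norm X)) < r"
    unfolding isCont_def LIM_eq using r by blast
  show "\<exists>s>0. \<forall>Y. Y \<noteq> X \<and> norm (Y - X) < s \<longrightarrow> norm (exp Y - exp X) < r"
  proof (intro exI[of _ d] conjI allI impI)
    show "d > 0" by (rule d(1))
    fix Y :: 'a assume Y: "Y \<noteq> X \<and> norm (Y - X) < d"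
    define H where "H = Y - X"
    have Hpos: "norm H > 0" using Y unfolding H_def by simp
    have "norm (exp Y - exp X) \<le> exp (norm X + norm H) - exp (norm X)"
      using exp_diff_bound[of X H] unfolding H_def by simp
    also have "\<dots> < r"
      using d(2)[of "norm X + norm H"] Y Hpos unfolding H_def by simp
    finally show "norm (exp Y - exp X) < r" .
  qed
qed

context jcore
begin
lemma Nflow: "2 *\<^sub>R (jm y (jm y (- jm a v) + jm (jm a y) v) + jm (jm a y) (jm y v))
   - (jm (jm y y) (- jm a v) + jm (jm y (jm a y) + jm (jm a y) y) v)
   = jm a (2 *\<^sub>R jm y (jm y v) - jm (jm y y) v)"
proof -
  have c: "jm (jm a y) y = jm y (jm a y)" by (rule comm)
  show ?thesis using N[of a y v] unfolding c by (simp add: JS lin)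
qed
end

context jv
begin

definition Lop :: "real^'n \<Rightarrow> 'n jop" where "Lop a = jabs (Blinfun (jm a))"

lemma Lop_apply[simp]: "blinfun_apply (jrep (Lop a)) v = jm a v"
  unfolding Lop_def using jop_Lop[OF J.bounded_linear_right[of a]] by simp

lemma jrep_eqI: "(\<And>v. blinfun_apply (jrep A) v = blinfun_apply (jrep B) v) \<Longrightarrow> A = B"
  by (metis blinfun_eqI jrep_inject)

lemma Lop_add: "Lop (a + b) = Lop a + Lop b"
  by (rule jrep_eqI) (simp add: jop_plus J.add_left)
lemma Lop_scale: "Lop (r *\<^sub>R a) = r *\<^sub>R Lop a"
  by (rule jrep_eqI) (simp add: jop_scaleR J.scaleR_left)

lemma Lop_bl: "bounded_linear Lop"
proof -
  obtain K where K: "K > 0" "\<And>a b. norm (jm a b) \<le> K * norm a * norm b" using Kpos by auto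
  show ?thesis
  proof (rule bounded_linear_intro[of _ K])
    show "Lop (a + b) = Lop a + Lop b" for a b by (rule Lop_add)
    show "Lop (r *\<^sub>R a) = r *\<^sub>R Lop a" for r a by (rule Lop_scale)
    show "norm (Lop a) \<le> norm a * K" for a
      unfolding norm_jop.rep_eq
    proof (rule norm_blinfun_bound)
      show "0 \<le> norm a * K" using K(1) by simp
      fix x show "norm (blinfun_apply (jrep (Lop a)) x) \<le> norm a * K * norm x"
        using K(2)[of a x] by (simp add: mult_ac)
    qed
  qed
qed

definition E :: "real \<Rightarrow> real^'n \<Rightarrow> real^'n \<Rightarrow> real^'n" where
  "E t a v = blinfun_apply (jrep (exp (t *\<^sub>R Lop a))) v"

lemma E0[simp]: "E 0 a v = v" unfolding E_def by simp

lemma E_inv: "E t a (E (-t) a v) = v" "E (-t) a (E t a v) = v"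
proof -
  have "exp (t *\<^sub>R Lop a) * exp ((-t) *\<^sub>R Lop a) = 1" using exp_minus_inverse[of "t *\<^sub>R Lop a"] by simp
  then show "E t a (E (-t) a v) = v" unfolding E_def jop_apply_times[symmetric] by simp
  have "exp ((-t) *\<^sub>R Lop a) * exp (t *\<^sub>R Lop a) = 1" using exp_minus_inverse[of "(-t) *\<^sub>R Lop a"] by simp
  then show "E (-t) a (E t a v) = v" unfolding E_def jop_apply_times[symmetric] by simp
qed

lemma E_comm: "E t a (jm a v) = jm a (E t a v)"
proof -
  have "exp (t *\<^sub>R Lop a) * Lop a = Lop a * exp (t *\<^sub>R Lop a)" by (rule exp_times_scaleR_commute)
  then have "blinfun_apply (jrep (exp (t *\<^sub>R Lop a) * Lop a)) v = blinfun_apply (jrep (Lop a * exp (t *\<^sub>R Lop a))) v" by simp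
  then show ?thesis unfolding E_def jop_apply_times by simp
qed

lemma E_linear: "linear (E t a)" unfolding E_def by (rule jop_linear)
lemma E_bl: "bounded_linear (E t a)" using E_linear[of t a] by (simp add: linear_conv_bounded_linear)

lemma apply_bl: "bounded_linear (\<lambda>M::'n jop. blinfun_apply (jrep M) v)"
  by (fact bounded_bilinear.bounded_linear_left[OF jop_bl])

lemma E_der: "((\<lambda>t. E t a v) has_vector_derivative jm a (E t a v)) (at t within S)"
proof -
  have "((\<lambda>t. blinfun_apply (jrep (exp (t *\<^sub>R Lop a))) v) has_vector_derivative
      blinfun_apply (jrep (Lop a * exp (t *\<^sub>R Lop a))) v) (at t)"
    by (rule bounded_linear.has_vector_derivative[OF apply_bl exp_scaleR_has_vector_derivative_left])
  then show ?thesis unfolding E_def jop_apply_times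
    by (simp add: has_vector_derivative_at_within)
qed

lemma E_der_neg: "((\<lambda>s. E (c - s) a v) has_vector_derivative - jm a (E (c - s) a v)) (at s)"
proof -
  have d1: "((\<lambda>s. c - s) has_vector_derivative (-1)) (at s)"
    using has_vector_derivative_diff[OF has_vector_derivative_const has_vector_derivative_id] by simp
  have "(((\<lambda>t. E t a v) \<circ> (\<lambda>s. c - s)) has_vector_derivative ((-1) *\<^sub>R jm a (E (c - s) a v))) (at s)"
    by (rule vector_diff_chain_at[OF d1 E_der])
  then show ?thesis by (simp add: o_def)
qed

lemma E_cont: "continuous_on S (\<lambda>t. E t a v)"
  by (intro continuous_at_imp_continuous_on ballI has_vector_derivative_continuous[OF E_der])

lemma E_sa: "\<gamma> (E t a u) w = \<gamma> u (E t a w)"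
proof -
  define g where "g s = \<gamma> (E s a u) (E (t - s) a w)" for s
  have "\<exists>c. \<forall>s\<in>UNIV. g s = c"
  proof (rule has_derivative_zero_constant)
    show "convex (UNIV :: real set)" by simp
    fix s :: real
    have "(g has_vector_derivative (\<gamma> (E s a u) (- jm a (E (t - s) a w)) + \<gamma> (jm a (E s a u)) (E (t - s) a w))) (at s)"
      unfolding g_def by (rule G.has_vector_derivative[OF E_der E_der_neg])
    also have "(\<gamma> (E s a u) (- jm a (E (t - s) a w)) + \<gamma> (jm a (E s a u)) (E (t - s) a w)) = 0"
      by (simp add: G.minus_right Lsa)
    finally show "(g has_derivative (\<lambda>h. 0)) (at s within UNIV)"
      by (simp add: has_vector_derivative_def)
  qed
  then have "g 0 = g t" by auto
  then show ?thesis unfolding g_def by simp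
qed

lemma Kflow0: "E (- t) a (P (E t a x) (E (- t) a w)) = P x w"
proof -
  define Y where "Y s = E s a x" for s
  define V where "V s = E (0 - s) a w" for s
  define Q where "Q s = P (Y s) (V s)" for s
  define M where "M s = exp ((0 - s) *\<^sub>R Lop a)" for s
  define g where "g s = blinfun_apply (jrep (M s)) (Q s)" for s
  have gE: "g s = E (0 - s) a (Q s)" for s by (simp add: g_def M_def E_def)
  have dg: "(g has_vector_derivative 0) (at s)" for s
  proof -
    have dY: "(Y has_vector_derivative jm a (Y s)) (at s)" unfolding Y_def by (rule E_der)
    have dV: "(V has_vector_derivative - jm a (V s)) (at s)" unfolding V_def by (rule E_der_neg)
    have d1: "((\<lambda>s. jm (Y s) (V s)) has_vector_derivative (jm (Y s) (- jm a (V s)) + jm (jm a (Y s)) (V s))) (at s)"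
      by (rule J.has_vector_derivative[OF dY dV])
    have d2: "((\<lambda>s. jm (Y s) (jm (Y s) (V s))) has_vector_derivative
        (jm (Y s) (jm (Y s) (- jm a (V s)) + jm (jm a (Y s)) (V s)) + jm (jm a (Y s)) (jm (Y s) (V s)))) (at s)"
      by (rule J.has_vector_derivative[OF dY d1])
    have d3: "((\<lambda>s. jm (Y s) (Y s)) has_vector_derivative (jm (Y s) (jm a (Y s)) + jm (jm a (Y s)) (Y s))) (at s)"
      by (rule J.has_vector_derivative[OF dY dY])
    have d4: "((\<lambda>s. jm (jm (Y s) (Y s)) (V s)) has_vector_derivative
        (jm (jm (Y s) (Y s)) (- jm a (V s)) + jm (jm (Y s) (jm a (Y s)) + jm (jm a (Y s)) (Y s)) (V s))) (at s)"
      by (rule J.has_vector_derivative[OF d3 dV])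
    have d5: "((\<lambda>s. 2 *\<^sub>R jm (Y s) (jm (Y s) (V s))) has_vector_derivative
        2 *\<^sub>R (jm (Y s) (jm (Y s) (- jm a (V s)) + jm (jm a (Y s)) (V s)) + jm (jm a (Y s)) (jm (Y s) (V s)))) (at s)"
      by (rule bounded_linear.has_vector_derivative[OF bounded_linear_scaleR_right d2])
    have dQ: "(Q has_vector_derivative jm a (Q s)) (at s)"
    proof -
      have "(Q has_vector_derivative
        (2 *\<^sub>R (jm (Y s) (jm (Y s) (- jm a (V s)) + jm (jm a (Y s)) (V s)) + jm (jm a (Y s)) (jm (Y s) (V s)))
         - (jm (jm (Y s) (Y s)) (- jm a (V s)) + jm (jm (Y s) (jm a (Y s)) + jm (jm a (Y s)) (Y s)) (V s)))) (at s)"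
        unfolding Q_def[abs_def] P_def by (rule has_vector_derivative_diff[OF d5 d4])
      then show ?thesis unfolding Nflow Q_def P_def .
    qed
    have d0: "((\<lambda>s. 0 - s) has_vector_derivative (0 - 1)) (at s)"
      by (rule has_vector_derivative_diff[OF has_vector_derivative_const has_vector_derivative_id])
    have "(((\<lambda>t. exp (t *\<^sub>R Lop a)) \<circ> (\<lambda>s. 0 - s)) has_vector_derivative ((0 - 1) *\<^sub>R (Lop a * exp ((0 - s) *\<^sub>R Lop a)))) (at s)"
      by (rule vector_diff_chain_at[OF d0 exp_scaleR_has_vector_derivative_left])
    then have dM: "(M has_vector_derivative ((-1) *\<^sub>R (Lop a * M s))) (at s)"
      unfolding M_def[abs_def] by (simp add: o_def)
    have "(g has_vector_derivative (blinfun_apply (jrep (M s)) (jm a (Q s)) + blinfun_apply (jrep ((-1) *\<^sub>R (Lop a * M s))) (Q s))) (at s)"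
      unfolding g_def[abs_def] by (rule bounded_bilinear.has_vector_derivative[OF jop_bl dM dQ])
    also have "blinfun_apply (jrep (M s)) (jm a (Q s)) + blinfun_apply (jrep ((-1) *\<^sub>R (Lop a * M s))) (Q s) = 0"
    proof -
      have "blinfun_apply (jrep (M s)) (jm a (Q s)) = jm a (E (0 - s) a (Q s))"
        using E_comm[of "0 - s" a "Q s"] by (simp add: M_def E_def)
      moreover have "blinfun_apply (jrep ((-1) *\<^sub>R (Lop a * M s))) (Q s) = - jm a (E (0 - s) a (Q s))"
        by (simp add: jop_scaleR jop_uminus jop_apply_times M_def E_def)
      ultimately show ?thesis by simp
    qed
    finally show ?thesis .
  qed
  have "\<exists>c. \<forall>s\<in>UNIV. g s = c"
  proof (rule has_derivative_zero_constant)
    show "convex (UNIV :: real set)" by simp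
    fix s :: real
    show "(g has_derivative (\<lambda>h. 0)) (at s within UNIV)"
      using dg[of s] by (simp add: has_vector_derivative_def)
  qed
  then have "g t = g 0" by auto
  then show ?thesis by (simp add: gE Q_def Y_def V_def)
qed

lemma Kflow: "P (E t a x) w = E t a (P x (E t a w))"
proof -
  have "E (- t) a (P (E t a x) w) = P x (E t a w)"
    using Kflow0[of t a x "E t a w"] by (simp add: E_inv)
  then have "E t a (E (- t) a (P (E t a x) w)) = E t a (P x (E t a w))" by simp
  then show ?thesis by (simp add: E_inv)
qed

lemma E_inj: "E t a u = E t a v \<Longrightarrow> u = v"
  by (metis E_inv(2))

lemma E_invertible: "jinvertible jm x \<Longrightarrow> jinvertible jm (E t a x)"
  unfolding jinv_iff
proof (rule injI)
  fix u v assume xi: "inj (P x)" and "P (E t a x) u = P (E t a x) v"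
  then have "E t a (P x (E t a u)) = E t a (P x (E t a v))" by (simp add: Kflow)
  then have "P x (E t a u) = P x (E t a v)" by (rule E_inj)
  then have "E t a u = E t a v" using xi injD by metis
  then show "u = v" by (rule E_inj)
qed

lemma E_jinverse: "jinvertible jm x \<Longrightarrow> jinverse jm (E t a x) = E (- t) a (jinverse jm x)"
proof -
  assume xi: "jinvertible jm x"
  show ?thesis by (rule jinv_unique[OF E_invertible[OF xi]]) (simp add: Kflow E_inv P_jinv[OF xi])
qed

lemma E_zeta: "jinvertible jm x \<Longrightarrow> zeta jm \<gamma> (E t a x) (E t a u) = zeta jm \<gamma> x u"
  unfolding zeta_def E_jinverse by (simp add: E_sa E_inv)

definition Yc where "Yc = connected_component_set {x. jinvertible jm x} e"

lemma Yc_inv: "x \<in> Yc \<Longrightarrow> jinvertible jm x"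
  unfolding Yc_def using connected_component_subset by blast

lemma e_Yc: "e \<in> Yc" unfolding Yc_def using e_inv(1) by (simp add: connected_component_refl)

lemma Yc_open: "open Yc" unfolding Yc_def by (rule open_connected_component[OF open_inv])

lemma Yc_conn: "x \<in> Yc \<Longrightarrow> connected A \<Longrightarrow> x \<in> A \<Longrightarrow> A \<subseteq> {x. jinvertible jm x} \<Longrightarrow> A \<subseteq> Yc"
  unfolding Yc_def by (metis connected_component_eq connected_component_maximal)

lemma E_Yc: "x \<in> Yc \<Longrightarrow> E t a x \<in> Yc"
proof -
  assume x: "x \<in> Yc"
  have "(\<lambda>s. E s a x) ` UNIV \<subseteq> Yc"
  proof (rule Yc_conn[OF x])
    show "connected ((\<lambda>s. E s a x) ` UNIV)"
      by (rule connected_continuous_image[OF E_cont connected_UNIV])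
    show "x \<in> (\<lambda>s. E s a x) ` UNIV" by (rule image_eqI[of _ _ 0]) auto
    show "(\<lambda>s. E s a x) ` UNIV \<subseteq> {x. jinvertible jm x}"
      using E_invertible Yc_inv[OF x] by auto
  qed
  then show ?thesis by auto
qed

definition Good where "Good g \<longleftrightarrow> g ` Yc \<subseteq> Yc \<and> (\<forall>x\<in>Yc. \<forall>u. zeta jm \<gamma> (g x) (g u) = zeta jm \<gamma> x u)"

lemma Good_id: "Good id" unfolding Good_def by auto
lemma Good_comp: "Good f \<Longrightarrow> Good g \<Longrightarrow> Good (f \<circ> g)" unfolding Good_def by (auto simp: image_subset_iff)
lemma Good_E: "Good (E t a)" unfolding Good_def using E_Yc E_zeta Yc_inv by auto

definition fe where "fe a = E 1 a e"

lemma P_fe: "P (fe a) = E 1 a \<circ> E 1 a"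
  unfolding fe_def by (rule ext) (simp add: Kflow P_e)

lemma inv_P_fe: "inv (P (fe a)) = E (-1) a \<circ> E (-1) a"
  unfolding P_fe by (rule inv_equality) (simp_all add: E_inv)

lemma Good_Pfe: "Good (P (fe a))" "Good (inv (P (fe a)))"
proof -
  show "Good (P (fe a))" unfolding P_fe by (simp add: Good_comp Good_E)
  show "Good (inv (P (fe a)))" unfolding inv_P_fe by (simp add: Good_comp Good_E)
qed

lemma fe_cont: "continuous_on UNIV fe"
proof -
  have c1: "continuous_on UNIV (exp :: 'n jop \<Rightarrow> 'n jop)"
    by (intro continuous_at_imp_continuous_on ballI isCont_exp_gen)
  have c2: "continuous_on UNIV (\<lambda>a. exp (Lop a))"
    by (rule continuous_on_compose2[OF c1 linear_continuous_on[OF Lop_bl]]) auto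
  have "continuous_on UNIV (\<lambda>a. blinfun_apply (jrep (exp (Lop a))) e)"
    by (rule continuous_on_compose2[OF linear_continuous_on[OF apply_bl] c2]) auto
  then show ?thesis unfolding fe_def E_def by simp
qed

lemma fe_der: "(fe has_derivative (\<lambda>h. h)) (at 0)"
proof -
  have L0: "Lop 0 = 0" using Lop_scale[of 0 0] by simp
  have d1: "(Lop has_derivative Lop) (at 0)" by (rule bounded_linear_imp_has_derivative[OF Lop_bl])
  have d2: "(exp has_derivative (\<lambda>X. X)) (at (Lop 0))" unfolding L0 by (rule exp_deriv0)
  have d3: "((\<lambda>a. exp (Lop a)) has_derivative (\<lambda>h. Lop h)) (at 0)"
    using has_derivative_compose[OF d1 d2] by simp
  have "((\<lambda>a. blinfun_apply (jrep (exp (Lop a))) e) has_derivative (\<lambda>h. blinfun_apply (jrep (Lop h)) e)) (at 0)"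
    using has_derivative_compose[OF d3 bounded_linear_imp_has_derivative[OF apply_bl]] by simp
  then show ?thesis unfolding fe_def E_def by (simp add: unit2)
qed

lemma e_interior: "e \<in> interior (range fe)"
proof -
  have "fe 0 \<in> interior (fe ` UNIV)"
    by (rule sussmann_open_mapping[OF open_UNIV fe_cont _ fe_der bounded_linear_ident]) auto
  moreover have "fe 0 = e" unfolding fe_def E_def
    using exp_zero by (simp add: Lop_scale[of 0 0, simplified])
  ultimately show ?thesis by simp
qed

lemma group_good:
  assumes "V \<subseteq> interior (range fe)"
  shows "g \<in> gen_group (Pop jm ` V) \<Longrightarrow> Good g"
proof (induction rule: gen_group.induct)
  case gen_id then show ?case by (rule Good_id)
next
  case (gen_mult g s)
  then obtain u where u: "u \<in> V" "s = Pop jm u" by auto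
  then obtain a where "u = fe a" using assms interior_subset by blast
  then have "Good s" using u Good_Pfe by (simp add: Pop_eq)
  then show ?case using gen_mult Good_comp by blast
next
  case (gen_inv g s)
  then obtain u where u: "u \<in> V" "s = Pop jm u" by auto
  then obtain a where "u = fe a" using assms interior_subset by blast
  then have "Good (inv s)" using u Good_Pfe by (simp add: Pop_eq)
  then show ?case using gen_inv Good_comp by blast
qed

lemma zeta_der: "jinvertible jm x \<Longrightarrow>
   ((\<lambda>y. zeta jm \<gamma> y v) has_derivative (\<lambda>h. \<gamma> v (P (jinverse jm x) h))) (at x)"
proof -
  assume xi: "jinvertible jm x"
  have bl: "bounded_linear (\<lambda>w. - \<gamma> v w)" using G.bounded_linear_right bounded_linear_minus by blast
  have "((\<lambda>y. - \<gamma> v (jinverse jm y)) has_derivative (\<lambda>h. - \<gamma> v (- P (jinverse jm x) h))) (at x)"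
    by (rule has_derivative_compose[OF jinv_deriv[OF xi] bounded_linear_imp_has_derivative[OF bl]])
  then show ?thesis unfolding zeta_def by (simp add: G.minus_right gsym[of v])
qed

lemma flatD_eq: "jinvertible jm x \<Longrightarrow> flatD (zeta jm \<gamma>) x u v = \<gamma> v (P (jinverse jm x) u)"
  unfolding flatD_def using frechet_derivative_at[OF zeta_der, of x v] by metis

lemma zeta_eq: "zeta jm \<gamma> x u = - \<gamma> u (jinverse jm x)" unfolding zeta_def ..

lemma not_inj_P0: "\<not> inj (P (0::real^'n))"
proof
  assume "inj (P (0::real^'n))"
  moreover have "P 0 0 = P 0 (axis undefined 1 :: real^'n)" by (simp add: P_def zero_left zero_right)
  ultimately have "(0::real^'n) = axis undefined 1" by (rule injD)
  then show False by (simp add: axis_eq_0_iff)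
qed

lemma jinv_nz: "jinvertible jm x \<Longrightarrow> jinverse jm x \<noteq> 0"
  using jinv_invertible not_inj_P0 jinv_iff by metis

lemma dim_Delta: "jinvertible jm x \<Longrightarrow> dim {u. zeta jm \<gamma> x u = 0} = CARD('n) - 1"
proof -
  assume xi: "jinvertible jm x"
  define z where "z = jinverse jm x"
  have z0: "z \<noteq> 0" unfolding z_def by (rule jinv_nz[OF xi])
  define c :: "real^'n" where "c = (\<Sum>b\<in>Basis. \<gamma> b z *\<^sub>R b)"
  have rep: "\<gamma> u z = c \<bullet> u" for u
  proof -
    have "\<gamma> u z = \<gamma> (\<Sum>b\<in>Basis. (u \<bullet> b) *\<^sub>R b) z" by (simp add: euclidean_representation)
    also have "\<dots> = (\<Sum>b\<in>Basis. (u \<bullet> b) * \<gamma> b z)" by (simp add: G.sum_left G.scaleR_left)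
    also have "\<dots> = c \<bullet> u" unfolding c_def by (simp add: inner_sum_left inner_sum_right mult.commute inner_commute[of u])
    finally show ?thesis .
  qed
  have c0: "c \<noteq> 0"
  proof
    assume "c = 0"
    then have "\<forall>v. \<gamma> z v = 0" using rep gsym by (metis inner_zero_left)
    then show False using nd z0 unfolding nondegenerate_form_def by blast
  qed
  have "{u. zeta jm \<gamma> x u = 0} = {u. c \<bullet> u = 0}" unfolding zeta_eq z_def[symmetric] rep by simp
  then show ?thesis using dim_hyperplane[OF c0] by simp
qed

end




theorem lemma4p6:
  fixes jm :: "real^'n \<Rightarrow> real^'n \<Rightarrow> real^'n"
    and \<gamma> :: "real^'n \<Rightarrow> real^'n \<Rightarrow> real"
    and e :: "real^'n"
  assumes dim: "CARD('n) \<ge> 2"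
    and jordan: "is_jordan_algebra jm"
    and unit: "\<forall>x. jm e x = x"
    and trace: "is_trace_form jm \<gamma>"
    and nondeg: "nondegenerate_form \<gamma>"
  defines "Y \<equiv> connected_component_set {x. jinvertible jm x} e"
    and "\<zeta> \<equiv> zeta jm \<gamma>"
    and "\<Delta> \<equiv> (\<lambda>x. {u. zeta jm \<gamma> x u = 0})"
    and "\<Gamma> \<equiv> {u. \<gamma> u e = 0}"
  shows
    "(\<gamma> e e = -1 \<longrightarrow> (\<forall>x\<in>Y. \<zeta> x x = 1))
     \<and> (\<forall>x\<in>Y. \<forall>v. (\<lambda>y. \<zeta> y v) differentiable (at x))
     \<and> (\<forall>x\<in>Y. \<forall>u v. flatD \<zeta> x u v = flatD \<zeta> x v u)
     \<and> (\<exists>U. open U \<and> e \<in> U \<and>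
          (\<forall>V. open V \<and> e \<in> V \<and> V \<subseteq> U \<longrightarrow>
             (\<forall>g \<in> gen_group (Pop jm ` V).
                 g ` Y \<subseteq> Y \<and> (\<forall>x\<in>Y. \<forall>u. \<zeta> (g x) (g u) = \<zeta> x u))))
     \<and> (\<forall>x\<in>Y. dim (\<Delta> x) = CARD('n) - 1)
     \<and> (\<forall>X Z. (\<forall>x\<in>Y. X differentiable (at x) \<and> Z differentiable (at x)
                      \<and> X x \<in> \<Delta> x \<and> Z x \<in> \<Delta> x)
             \<longrightarrow> (\<forall>x\<in>Y. frechet_derivative Z (at x) (X x)
                          - frechet_derivative X (at x) (Z x) \<in> \<Delta> x))
     \<and> (\<forall>x\<in>Y. nondegenerate_form (flatD \<zeta> x))
     \<and> (\<forall>w\<in>\<Gamma>. \<forall>x\<in>Y. \<zeta> x (jm x w) = 0)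
     \<and> (\<forall>x\<in>Y. jinverse jm x \<in> Y \<and> jinverse jm differentiable (at x)
          \<and> frechet_derivative (jinverse jm) (at x) ` \<Delta> x = \<Delta> (jinverse jm x)
          \<and> (\<forall>u v. flatD \<zeta> (jinverse jm x)
                      (frechet_derivative (jinverse jm) (at x) u)
                      (frechet_derivative (jinverse jm) (at x) v)
                    = flatD \<zeta> x u v))"
proof -
  interpret jv jm e \<gamma>
    using jordan unit trace nondeg unfolding is_jordan_algebra_def by unfold_locales auto
  have Yeq: "Y = Yc" unfolding assms(6) Yc_def ..
  have zeq: "\<zeta> = zeta jm \<gamma>" unfolding assms(7) ..
  have Deq: "\<Delta> = (\<lambda>x. {u. zeta jm \<gamma> x u = 0})" unfolding assms(8) ..
  have Geq: "\<Gamma> = {u. \<gamma> u e = 0}" unfolding assms(9) ..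
  note Yi = Yc_inv[folded Yeq]
  have c1: "\<gamma> e e = -1 \<longrightarrow> (\<forall>x\<in>Y. \<zeta> x x = 1)"
  proof (intro impI ballI)
    fix x assume ee: "\<gamma> e e = -1" and x: "x \<in> Y"
    have "\<gamma> x (jinverse jm x) = \<gamma> (jm x e) (jinverse jm x)" by (simp add: unit2)
    also have "\<dots> = \<gamma> e (jm x (jinverse jm x))" by (rule Lsa)
    also have "\<dots> = \<gamma> e e" using jinv_mul[OF Yi[OF x]] by simp
    finally show "\<zeta> x x = 1" unfolding zeq zeta_eq using ee by simp
  qed
  have c2: "\<forall>x\<in>Y. \<forall>v. (\<lambda>y. \<zeta> y v) differentiable (at x)"
    unfolding zeq differentiable_def using zeta_der Yi by blast
  have c3: "\<forall>x\<in>Y. \<forall>u v. flatD \<zeta> x u v = flatD \<zeta> x v u"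
    unfolding zeq using flatD_eq Yi by (metis P_selfadj gsym)
  have c4: "\<exists>U. open U \<and> e \<in> U \<and>
          (\<forall>V. open V \<and> e \<in> V \<and> V \<subseteq> U \<longrightarrow>
             (\<forall>g \<in> gen_group (Pop jm ` V).
                 g ` Y \<subseteq> Y \<and> (\<forall>x\<in>Y. \<forall>u. \<zeta> (g x) (g u) = \<zeta> x u)))"
  proof (intro exI[of _ "interior (range fe)"] conjI allI impI)
    show "open (interior (range fe))" by simp
    show "e \<in> interior (range fe)" by (rule e_interior)
    fix V assume V: "open V \<and> e \<in> V \<and> V \<subseteq> interior (range fe)"
    show "\<forall>g \<in> gen_group (Pop jm ` V). g ` Y \<subseteq> Y \<and> (\<forall>x\<in>Y. \<forall>u. \<zeta> (g x) (g u) = \<zeta> x u)"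
    proof
      fix g assume g: "g \<in> gen_group (Pop jm ` V)"
      have "Good g" using group_good[of V g] V g by blast
      then show "g ` Y \<subseteq> Y \<and> (\<forall>x\<in>Y. \<forall>u. \<zeta> (g x) (g u) = \<zeta> x u)" unfolding Good_def Yeq zeq by auto
    qed
  qed
  have c5: "\<forall>x\<in>Y. dim (\<Delta> x) = CARD('n) - 1"
    unfolding Deq using dim_Delta Yi by blast
  have c6: "\<forall>X Z. (\<forall>x\<in>Y. X differentiable (at x) \<and> Z differentiable (at x)
                      \<and> X x \<in> \<Delta> x \<and> Z x \<in> \<Delta> x)
             \<longrightarrow> (\<forall>x\<in>Y. frechet_derivative Z (at x) (X x)
                          - frechet_derivative X (at x) (Z x) \<in> \<Delta> x)"
  proof (intro allI impI ballI)
    fix X Z x assume H: "\<forall>x\<in>Y. X differentiable (at x) \<and> Z differentiable (at x) \<and> X x \<in> \<Delta> x \<and> Z x \<in> \<Delta> x"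
      and x: "x \<in> Y"
    have xi: "jinvertible jm x" by (rule Yi[OF x])
    define z where "z = jinverse jm x"
    have key: "\<gamma> (frechet_derivative W (at x) k) z = \<gamma> (W x) (P z k)"
      if W: "\<forall>y\<in>Y. W differentiable (at y) \<and> W y \<in> \<Delta> y" for W k
    proof -
      have dW: "(W has_derivative frechet_derivative W (at x)) (at x)"
        using W x frechet_derivative_works by blast
      have hd: "((\<lambda>y. \<gamma> (W y) (jinverse jm y)) has_derivative
          (\<lambda>h. \<gamma> (W x) (- P z h) + \<gamma> (frechet_derivative W (at x) h) (jinverse jm x))) (at x)"
        unfolding z_def by (rule G.FDERIV[OF dW jinv_deriv[OF xi]])
      have "((\<lambda>y. 0::real) has_derivative
          (\<lambda>h. \<gamma> (W x) (- P z h) + \<gamma> (frechet_derivative W (at x) h) (jinverse jm x))) (at x)"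
      proof (rule has_derivative_transform_within_open[OF hd])
        show "open Y" unfolding Yeq by (rule Yc_open)
        show "x \<in> Y" by (rule x)
        fix y assume "y \<in> Y"
        then have "W y \<in> \<Delta> y" using W by blast
        then show "\<gamma> (W y) (jinverse jm y) = 0" unfolding Deq zeta_eq by simp
      qed
      moreover have "((\<lambda>y. 0::real) has_derivative (\<lambda>h. 0)) (at x)" by simp
      ultimately have "(\<lambda>h. \<gamma> (W x) (- P z h) + \<gamma> (frechet_derivative W (at x) h) (jinverse jm x)) = (\<lambda>h. 0)"
        by (rule has_derivative_unique)
      then have "\<gamma> (W x) (- P z k) + \<gamma> (frechet_derivative W (at x) k) z = 0"
        unfolding z_def by metis
      then show ?thesis by (simp add: G.minus_right)
    qed
    have kZ: "\<gamma> (frechet_derivative Z (at x) (X x)) z = \<gamma> (Z x) (P z (X x))"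
      by (rule key) (use H in blast)
    have kX: "\<gamma> (frechet_derivative X (at x) (Z x)) z = \<gamma> (X x) (P z (Z x))"
      by (rule key) (use H in blast)
    have sym: "\<gamma> (X x) (P z (Z x)) = \<gamma> (Z x) (P z (X x))"
      by (metis P_selfadj gsym)
    show "frechet_derivative Z (at x) (X x) - frechet_derivative X (at x) (Z x) \<in> \<Delta> x"
      unfolding Deq zeta_eq z_def[symmetric] using kZ kX sym by (simp add: G.diff_left)
  qed
  have c7: "\<forall>x\<in>Y. nondegenerate_form (flatD \<zeta> x)"
  proof (intro ballI)
    fix x assume x: "x \<in> Y"
    have xi: "jinvertible jm x" by (rule Yi[OF x])
    show "nondegenerate_form (flatD \<zeta> x)"
      unfolding nondegenerate_form_def zeq flatD_eq[OF xi]
    proof (intro allI impI)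
      fix u assume "\<forall>v. \<gamma> v (P (jinverse jm x) u) = 0"
      then have "\<forall>v. \<gamma> (P (jinverse jm x) u) v = 0" using gsym by metis
      then have "P (jinverse jm x) u = 0" using nd unfolding nondegenerate_form_def by blast
      then have "P (jinverse jm x) u = P (jinverse jm x) 0" by (simp add: P_zero)
      then show "u = 0" using jinv_invertible[OF xi] jinv_iff injD by metis
    qed
  qed
  have c8: "\<forall>w\<in>\<Gamma>. \<forall>x\<in>Y. \<zeta> x (jm x w) = 0"
  proof (intro ballI)
    fix w x assume w: "w \<in> \<Gamma>" and x: "x \<in> Y"
    have "\<gamma> (jm x w) (jinverse jm x) = \<gamma> w (jm x (jinverse jm x))" by (rule Lsa)
    also have "\<dots> = \<gamma> w e" using jinv_mul[OF Yi[OF x]] by simp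
    also have "\<dots> = 0" using w unfolding Geq by simp
    finally show "\<zeta> x (jm x w) = 0" unfolding zeq zeta_eq by simp
  qed
  have c9: "\<forall>x\<in>Y. jinverse jm x \<in> Y \<and> jinverse jm differentiable (at x)
          \<and> frechet_derivative (jinverse jm) (at x) ` \<Delta> x = \<Delta> (jinverse jm x)
          \<and> (\<forall>u v. flatD \<zeta> (jinverse jm x)
                      (frechet_derivative (jinverse jm) (at x) u)
                      (frechet_derivative (jinverse jm) (at x) v)
                    = flatD \<zeta> x u v)"
  proof (intro ballI conjI allI)
    fix x assume x: "x \<in> Y"
    have xi: "jinvertible jm x" by (rule Yi[OF x])
    define z where "z = jinverse jm x"
    have fd: "frechet_derivative (jinverse jm) (at x) = (\<lambda>h. - P z h)"
      unfolding z_def using frechet_derivative_at[OF jinv_deriv[OF xi]] by simp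
    have cont: "continuous_on Y (jinverse jm)"
      by (intro continuous_at_imp_continuous_on ballI has_derivative_continuous[OF jinv_deriv] Yi)
    have "jinverse jm ` Y \<subseteq> Yc"
    proof (rule Yc_conn[OF e_Yc])
      show "connected (jinverse jm ` Y)"
        by (rule connected_continuous_image[OF cont]) (simp add: Yeq Yc_def connected_connected_component)
      show "e \<in> jinverse jm ` Y" using e_Yc e_inv(2) Yeq by (metis image_eqI)
      show "jinverse jm ` Y \<subseteq> {x. jinvertible jm x}" using Yi jinv_invertible by auto
    qed
    then show "jinverse jm x \<in> Y" using x Yeq by auto
    show "jinverse jm differentiable (at x)" unfolding differentiable_def using jinv_deriv[OF xi] by blast
    show "frechet_derivative (jinverse jm) (at x) ` \<Delta> x = \<Delta> (jinverse jm x)"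
    proof -
      have D1: "\<Delta> x = {u. - \<gamma> u z = 0}" unfolding Deq zeta_eq z_def ..
      have D2: "\<Delta> (jinverse jm x) = {u. - \<gamma> u x = 0}" unfolding Deq zeta_eq jinv_jinv[OF xi] ..
      show ?thesis unfolding fd D1 D2
    proof (intro set_eqI iffI)
      fix w assume "w \<in> (\<lambda>h. - P z h) ` {u. - \<gamma> u z = 0}"
      then obtain u where u: "\<gamma> u z = 0" "w = - P z u" by auto
      have "\<gamma> (P z u) x = \<gamma> u (P z x)" by (rule P_selfadj)
      also have "P z x = z" unfolding z_def by (rule P_inv_x[OF xi])
      finally show "w \<in> {u. - \<gamma> u x = 0}" using u by (simp add: G.minus_left)
    next
      fix w assume w: "w \<in> {u. - \<gamma> u x = 0}"
      have "\<gamma> (P x w) z = \<gamma> w (P x z)" by (rule P_selfadj)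
      also have "P x z = x" unfolding z_def by (rule P_jinv[OF xi])
      finally have "\<gamma> (- P x w) z = 0" using w by (simp add: G.minus_left)
      moreover have "w = - P z (- P x w)" unfolding z_def using P_inv_left[OF xi, of w] by (simp add: P_scale[of _ "-1", simplified])
      ultimately show "w \<in> (\<lambda>h. - P z h) ` {u. - \<gamma> u z = 0}" by (intro image_eqI[of _ _ "- P x w"]) auto
    qed
    qed
    fix u v
    have zi: "jinvertible jm z" unfolding z_def by (rule jinv_invertible[OF xi])
    have "flatD \<zeta> (jinverse jm x) (- P z u) (- P z v) = \<gamma> (- P z v) (P x (- P z u))"
      unfolding zeq flatD_eq[OF zi[unfolded z_def]] jinv_jinv[OF xi] z_def ..
    also have "\<dots> = \<gamma> (P z v) u"
      using P_inv_right[OF xi, of u] unfolding z_def by (simp add: P_scale[of _ "-1", simplified] G.minus_left G.minus_right)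
    also have "\<dots> = \<gamma> v (P z u)" by (simp add: P_selfadj)
    also have "\<dots> = flatD \<zeta> x u v" unfolding zeq flatD_eq[OF xi] z_def ..
    finally show "flatD \<zeta> (jinverse jm x) (frechet_derivative (jinverse jm) (at x) u)
        (frechet_derivative (jinverse jm) (at x) v) = flatD \<zeta> x u v" unfolding fd .
  qed
  show ?thesis using c1 c2 c3 c4 c5 c6 c7 c8 c9 by blast
qed


end
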